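(* Let $\mathcal{H},\mathcal{K}$ be real or complex Hilbert spaces and let $S:\mathcal{H}\to\mathcal{K}$ and $T:\mathcal{K}\to\mathcal{H}$ be (not necessarily densely defined) surjective linear operators such that $$\langle Sx,y\rangle=\langle x,Ty\rangle\qquad \text{for all } x\in\operatorname{dom} S,\ y\in\operatorname{dom} T.$$ Then $S$ and $T$ are both densely defined operators such that $S^*=T$ and $T^*=S$.
   Context: Linear operators are defined on linear subspaces $\operatorname{dom}$ of the respective space; surjective means the range is the whole target space. *)

theory Defs
  imports "HOL-Analysis.Analysis"
begin

class complex_vector = real_vector +
  fixes scaleC :: "complex \<Rightarrow> 'a \<Rightarrow> 'a"
  assumes scaleC_add_right: "scaleC a (x + y) = scaleC a x + scaleC a y"
    and scaleC_add_left: "scaleC (a + b) x = scaleC a x + scaleC b x"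
    and scaleC_scaleC: "scaleC a (scaleC b x) = scaleC (a * b) x"
    and scaleC_one: "scaleC 1 x = x"
    and scaleR_scaleC: "scaleR r x = scaleC (complex_of_real r) x"

class complex_inner = complex_vector + real_normed_vector +
  fixes cinner :: "'a \<Rightarrow> 'a \<Rightarrow> complex"
  assumes cinner_commute: "cinner x y = cnj (cinner y x)"
    and cinner_add_left: "cinner (x + y) z = cinner x z + cinner y z"
    and cinner_scaleC_left: "cinner (scaleC r x) y = cnj r * cinner x y"
    and cinner_ge_zero: "Im (cinner x x) = 0 \<and> 0 \<le> Re (cinner x x)"
    and cinner_eq_zero_iff: "cinner x x = 0 \<longleftrightarrow> x = 0"
    and norm_eq_sqrt_cinner: "norm x = sqrt (Re (cinner x x))"

class chilbert_space = complex_inner + complete_space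

definition r_lin_op :: "'a::real_vector set \<Rightarrow> ('a \<Rightarrow> 'b::real_vector) \<Rightarrow> bool" where
  "r_lin_op D S \<longleftrightarrow> subspace D \<and>
     (\<forall>x\<in>D. \<forall>y\<in>D. S (x + y) = S x + S y) \<and> (\<forall>c. \<forall>x\<in>D. S (c *\<^sub>R x) = c *\<^sub>R S x)"

definition c_subspace :: "'a::complex_vector set \<Rightarrow> bool" where
  "c_subspace D \<longleftrightarrow> 0 \<in> D \<and> (\<forall>x\<in>D. \<forall>y\<in>D. x + y \<in> D) \<and> (\<forall>c. \<forall>x\<in>D. scaleC c x \<in> D)"

definition c_lin_op :: "'a::complex_vector set \<Rightarrow> ('a \<Rightarrow> 'b::complex_vector) \<Rightarrow> bool" where
  "c_lin_op D S \<longleftrightarrow> c_subspace D \<and>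
     (\<forall>x\<in>D. \<forall>y\<in>D. S (x + y) = S x + S y) \<and> (\<forall>c. \<forall>x\<in>D. S (scaleC c x) = scaleC c (S x))"

definition op_graph :: "'a set \<Rightarrow> ('a \<Rightarrow> 'b) \<Rightarrow> ('a \<times> 'b) set" where
  "op_graph E T = {(y, T y) | y. y \<in> E}"

text \<open>Graph of the adjoint of the operator S with domain D (a linear relation in general):
  (y, z) belongs to it iff <S x, y> = <x, z> for all x in D.\<close>
definition r_adjoint :: "'a::real_inner set \<Rightarrow> ('a \<Rightarrow> 'b::real_inner) \<Rightarrow> ('b \<times> 'a) set" where
  "r_adjoint D S = {(y, z). \<forall>x\<in>D. inner (S x) y = inner x z}"

definition c_adjoint :: "'a::complex_inner set \<Rightarrow> ('a \<Rightarrow> 'b::complex_inner) \<Rightarrow> ('b \<times> 'a) set" where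
  "c_adjoint D S = {(y, z). \<forall>x\<in>D. cinner (S x) y = cinner x z}"

end

theory Submission
  imports Defs
begin


lemma closest_point_exists_par:
  fixes C :: "'a::{real_normed_vector, complete_space} set"
  assumes par: "\<And>x y::'a. norm(x+y)^2 + norm(x-y)^2 = 2*norm x^2 + 2*norm y^2"
    and cl: "closed C" and cv: "convex C" and ne: "C \<noteq> {}"
  shows "\<exists>p\<in>C. \<forall>c\<in>C. dist w p \<le> dist w c"
proof -
  define d where "d = infdist w C"
  have d0: "0 \<le> d" by (simp add: d_def infdist_nonneg)
  have dle: "\<And>c. c \<in> C \<Longrightarrow> d \<le> dist w c" by (simp add: d_def infdist_le)
  have approx: "\<exists>c\<in>C. dist w c < d + e" if "e > 0" for e
  proof (rule ccontr)
    assume "\<not> ?thesis"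
    then have "\<forall>c\<in>C. d + e \<le> dist w c" by force
    then have "d + e \<le> d" unfolding d_def infdist_notempty[OF ne]
      by (intro cINF_greatest ne) auto
    with that show False by simp
  qed
  have "\<forall>n. \<exists>c\<in>C. dist w c < d + 1/(real n+1)"
    by (intro allI approx) simp
  then obtain c where cC: "\<And>n. c n \<in> C" and cd: "\<And>n. dist w (c n) < d + 1/(real n+1)"
    by metis
  have sq: "(dist w (c n))^2 \<le> d^2 + (2*d+1) * (1/(real n+1))" for n
  proof -
    define e where "e = 1/(real n+1)"
    have e0: "0 < e" "e \<le> 1" by (auto simp: e_def field_simps)
    have a: "d \<le> dist w (c n)" "dist w (c n) < d + e" using dle[OF cC] cd e_def by auto
    have "(dist w (c n))^2 \<le> (d+e)^2" using a d0 by (intro power_mono) auto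
    also have "\<dots> = d^2 + 2*d*e + e*e" by (simp add: power2_eq_square algebra_simps)
    also have "\<dots> \<le> d^2 + 2*d*e + 1*e" using e0 by (intro add_left_mono mult_right_mono) auto
    finally show ?thesis by (simp add: e_def algebra_simps)
  qed
  have est: "(norm (c n - c m))^2 \<le> 2*(2*d+1)*(1/(real n+1) + 1/(real m+1))" for n m
  proof -
    define mid where "mid = (1/2) *\<^sub>R c n + (1/2) *\<^sub>R c m"
    have "mid \<in> C" unfolding mid_def using cv cC by (intro convexD) auto
    then have md: "d \<le> dist w mid" by (rule dle)
    have e1: "(w - c n) + (w - c m) = 2 *\<^sub>R (w - mid)" by (simp add: mid_def algebra_simps scaleR_2)
    have e2: "(w - c n) - (w - c m) = -(c n - c m)" by simp
    have "norm (2 *\<^sub>R (w - mid)) = 2 * dist w mid" by (simp add: dist_norm)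
    then have "(norm (c n - c m))^2 = 2*(dist w (c n))^2 + 2*(dist w (c m))^2 - 4 * (dist w mid)^2"
      using par[of "w - c n" "w - c m"] unfolding e1 e2 norm_minus_cancel
      by (simp add: dist_norm power_mult_distrib)
    moreover have "d^2 \<le> (dist w mid)^2" using md d0 by (intro power_mono) auto
    ultimately have "(norm (c n - c m))^2 \<le> 2*((2*d+1) * (1/(real n+1))) + 2*((2*d+1) * (1/(real m+1)))"
      using sq[of n] sq[of m] by linarith
    then show ?thesis by (simp add: algebra_simps)
  qed
  have "Cauchy c"
  proof (rule CauchyI)
    fix e :: real assume e: "0 < e"
    obtain M :: nat where M: "4*(2*d+1)/e^2 < real M" using reals_Archimedean2 by blast
    show "\<exists>M. \<forall>m\<ge>M. \<forall>n\<ge>M. norm (c m - c n) < e"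
    proof (intro exI allI impI)
      fix m n assume mn: "M \<le> m" "M \<le> n"
      have "1/(real m+1) \<le> 1/(real M+1)" "1/(real n+1) \<le> 1/(real M+1)"
        using mn by (auto intro!: divide_left_mono)
      then have "(norm (c m - c n))^2 \<le> 2*(2*d+1)*(2/(real M+1))"
      proof -
        have "2*(2*d+1)*(1/(real m+1) + 1/(real n+1)) \<le> 2*(2*d+1)*(1/(real M+1) + 1/(real M+1))"
          using d0 \<open>1/(real m+1) \<le> 1/(real M+1)\<close> \<open>1/(real n+1) \<le> 1/(real M+1)\<close>
          by (intro mult_left_mono) auto
        then show ?thesis using est[of m n] by simp
      qed
      also have "\<dots> < e^2"
      proof -
        have "4*(2*d+1) < real M * e^2" using M e by (simp add: pos_divide_less_eq)
        also have "\<dots> \<le> e^2 * (real M + 1)" using e by (simp add: algebra_simps)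
        finally have "4*(2*d+1) < e^2 * (real M + 1)" .
        then have "4*(2*d+1) / (real M + 1) < e^2" by (simp add: pos_divide_less_eq)
        then show ?thesis by simp
      qed
      finally show "norm (c m - c n) < e"
        using e by (meson not_less power_mono less_imp_le norm_ge_zero)
    qed
  qed
  then obtain p where p: "c \<longlonglongrightarrow> p" using Cauchy_convergent_iff convergent_def by blast
  have pC: "p \<in> C" using closed_sequentially[OF cl] cC p by blast
  have l1: "(\<lambda>n. dist w (c n)) \<longlonglongrightarrow> dist w p" by (intro tendsto_intros p)
  have l2: "(\<lambda>n. d + 1/(real n+1)) \<longlonglongrightarrow> d"
    using LIMSEQ_inverse_real_of_nat_add[of d] by (simp add: inverse_eq_divide add.commute)
  have "dist w p \<le> d" using cd by (intro LIMSEQ_le[OF l1 l2]) (auto intro: less_imp_le)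
  then show ?thesis using pC dle by force
qed



lemma quad_zero:
  fixes a N :: real
  assumes N: "0 \<le> N" and h: "\<And>t. 2*t*a \<le> t^2*N"
  shows "a = 0"
proof (rule ccontr)
  assume a: "a \<noteq> 0"
  define t where "t = a/(N+1)"
  have tN: "t*(N+1) = a" using N by (simp add: t_def)
  have "2*t*a*(N+1) \<le> t^2*N*(N+1)" using h[of t] N by (intro mult_right_mono) auto
  moreover have "2*t*a*(N+1) = 2*a*a"
  proof -
    have "2*t*a*(N+1) = 2*a*(t*(N+1))" by (simp add: algebra_simps)
    then show ?thesis using tN by simp
  qed
  moreover have "t^2*N*(N+1) = t*N*a"
  proof -
    have "t^2*N*(N+1) = t*N*(t*(N+1))" by (simp add: power2_eq_square algebra_simps)
    then show ?thesis using tN by simp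
  qed
  ultimately have "2*a*a \<le> t*N*a" by simp
  then have "2*a*a*(N+1) \<le> t*N*a*(N+1)" using N mult_right_mono[of "2*a*a" "t*N*a" "N+1"] by simp
  moreover have "t*N*a*(N+1) = N*a*a"
  proof -
    have "t*N*a*(N+1) = N*a*(t*(N+1))" by (simp add: algebra_simps)
    then show ?thesis using tN by simp
  qed
  moreover have "a*a*(N+2) = 2*a*a*(N+1) - N*a*a" by (simp add: algebra_simps)
  ultimately have "a*a*(N+2) \<le> 0" by linarith
  moreover have "0 < a*a" using a by (auto simp: zero_less_mult_iff linorder_neq_iff)
  ultimately show False using N by (smt (verit) mult_pos_pos)
qed

lemma r_adj_part:
  fixes D :: "'a::real_inner set" and S :: "'a \<Rightarrow> 'b::real_inner"
  assumes SD: "S ` D = UNIV" and TE: "T ` E = UNIV"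
    and adj: "\<forall>x\<in>D. \<forall>y\<in>E. inner (S x) y = inner x (T y)"
  shows "r_adjoint D S = op_graph E T"
proof
  show "op_graph E T \<subseteq> r_adjoint D S"
    using adj by (auto simp: op_graph_def r_adjoint_def)
next
  show "r_adjoint D S \<subseteq> op_graph E T"
  proof
    fix q assume "q \<in> r_adjoint D S"
    then obtain y z where q: "q = (y, z)" and h: "\<forall>x\<in>D. inner (S x) y = inner x z"
      by (auto simp: r_adjoint_def)
    obtain y' where y': "y' \<in> E" "z = T y'" using TE by (metis UNIV_I image_iff)
    obtain x where x: "x \<in> D" "S x = y - y'" using SD by (metis UNIV_I image_iff)
    have "inner (S x) y = inner x z" using h x(1) by blast
    also have "\<dots> = inner (S x) y'" using adj x(1) y' by metis
    finally have "inner (S x) y = inner (S x) y'" .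
    then have "inner (y - y') (y - y') = 0" using x by (simp add: inner_diff_right)
    then have "y = y'" by simp
    then show "q \<in> op_graph E T" using q y' by (auto simp: op_graph_def)
  qed
qed

lemma r_dense_part:
  fixes D :: "'a::{real_inner,complete_space} set" and S :: "'a \<Rightarrow> 'b::real_inner"
  assumes lD: "r_lin_op D S" and lE: "r_lin_op E T" and SD: "S ` D = UNIV" and TE: "T ` E = UNIV"
    and adj: "\<forall>x\<in>D. \<forall>y\<in>E. inner (S x) y = inner x (T y)"
  shows "closure D = UNIV"
proof -
  have subD: "subspace D" using lD by (simp add: r_lin_op_def)
  have subE: "subspace E" using lE by (simp add: r_lin_op_def)
  have perp0: "v = 0" if v: "\<forall>x\<in>D. inner x v = 0" for v
  proof -
    obtain y where y: "y \<in> E" "v = T y" using TE by (metis UNIV_I image_iff)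
    obtain x where x: "x \<in> D" "S x = y" using SD by (metis UNIV_I image_iff)
    have "inner y y = inner (S x) y" using x by simp
    also have "\<dots> = inner x (T y)" using adj x(1) y(1) by blast
    also have "\<dots> = 0" using v x(1) y(2) by blast
    finally have "inner y y = 0" .
    then have "y = 0" by simp
    have "T (0 *\<^sub>R 0) = 0 *\<^sub>R T 0" using lE subE subspace_0[OF subE] unfolding r_lin_op_def by blast
    then have "T 0 = 0" by simp
    then show "v = 0" using y \<open>y = 0\<close> by simp
  qed
  have par: "\<And>x y::'a. norm(x+y)^2 + norm(x-y)^2 = 2*norm x^2 + 2*norm y^2"
    by (simp add: power2_norm_eq_inner inner_add_left inner_add_right inner_diff_left inner_diff_right inner_commute)
  show ?thesis
  proof (rule set_eqI, rule iffI)
    fix w :: 'a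
    have "\<exists>p\<in>closure D. \<forall>c\<in>closure D. dist w p \<le> dist w c"
      using subD subspace_0[OF subD] by (intro closest_point_exists_par par convex_closure subspace_imp_convex)
        auto
    then obtain p where p: "p \<in> closure D" and pc: "\<And>c. c \<in> closure D \<Longrightarrow> dist w p \<le> dist w c"
      by blast
    define v where "v = w - p"
    have orth: "inner m v = 0" if m: "m \<in> D" for m
    proof -
      have "2*t*inner v m \<le> t^2*inner m m" for t
      proof -
        have "(+) (t *\<^sub>R m) ` D \<subseteq> D" using subD m
          by (auto simp: subspace_add subspace_mul)
        then have "closure ((+) (t *\<^sub>R m) ` D) \<subseteq> closure D" by (rule closure_mono)
        then have "t *\<^sub>R m + p \<in> closure D" using p closure_translation[of "t *\<^sub>R m" D] by auto
        then have "dist w p \<le> dist w (t *\<^sub>R m + p)" by (rule pc)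
        then have "norm v \<le> norm (v - t *\<^sub>R m)" by (simp add: dist_norm v_def algebra_simps)
        then have "(norm v)^2 \<le> (norm (v - t *\<^sub>R m))^2" by (simp add: power_mono)
        then have "inner v v \<le> inner (v - t *\<^sub>R m) (v - t *\<^sub>R m)" by (simp only: power2_norm_eq_inner)
        then show ?thesis
          by (simp add: power2_norm_eq_inner inner_diff_left inner_diff_right inner_commute power2_eq_square algebra_simps)
      qed
      then have "inner v m = 0" by (intro quad_zero[of "inner m m"]) auto
      then show ?thesis by (simp add: inner_commute)
    qed
    then have "v = 0" using perp0 by blast
    then show "w \<in> closure D" using p by (simp add: v_def)
  qed simp
qed

lemma real_part:
  fixes D :: "'a::{real_inner,complete_space} set" and S :: "'a \<Rightarrow> 'b::{real_inner,complete_space}"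
  assumes "r_lin_op D S" and "r_lin_op E T" and "S ` D = UNIV" and "T ` E = UNIV"
    and adj: "\<forall>x\<in>D. \<forall>y\<in>E. inner (S x) y = inner x (T y)"
  shows "closure D = UNIV \<and> closure E = UNIV \<and> r_adjoint D S = op_graph E T \<and> r_adjoint E T = op_graph D S"
proof -
  have adj': "\<forall>y\<in>E. \<forall>x\<in>D. inner (T y) x = inner y (S x)" using adj by (simp add: inner_commute)
  show ?thesis using assms adj'
    by (simp add: r_dense_part[of D S E T] r_dense_part[of E T D S] r_adj_part[of S D T E] r_adj_part[of T E S D])
qed



context
begin

lemma scaleC_zero_left [simp]: "scaleC 0 (x::'a::complex_vector) = 0"
  using scaleR_scaleC[of 0 x] by simp

lemma scaleC_real: "scaleC (complex_of_real r) (x::'a::complex_vector) = r *\<^sub>R x"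
  by (simp add: scaleR_scaleC)

lemma minus_scaleC: "- (x::'a::complex_vector) = scaleC (-1) x"
  using scaleR_scaleC[of "-1" x] by simp

lemma cinner_zero_left [simp]: "cinner 0 (y::'a::complex_inner) = 0"
  using cinner_add_left[of 0 0 y] by simp

lemma cinner_zero_right [simp]: "cinner (y::'a::complex_inner) 0 = 0"
  using cinner_commute[of y 0] by simp

lemma cinner_add_right: "cinner (x::'a::complex_inner) (y + z) = cinner x y + cinner x z"
  by (metis cinner_commute cinner_add_left complex_cnj_add)

lemma cinner_scaleC_right: "cinner (x::'a::complex_inner) (scaleC r y) = r * cinner x y"
  by (metis cinner_commute cinner_scaleC_left complex_cnj_mult complex_cnj_cnj)

lemma cinner_minus_left: "cinner (- x::'a::complex_inner) y = - cinner x y"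
  by (simp add: minus_scaleC cinner_scaleC_left)

lemma cinner_minus_right: "cinner (x::'a::complex_inner) (- y) = - cinner x y"
  by (simp add: minus_scaleC cinner_scaleC_right)

lemma cinner_diff_left: "cinner (x - y::'a::complex_inner) z = cinner x z - cinner y z"
  using cinner_add_left[of x "-y" z] by (simp add: cinner_minus_left)

lemma cinner_diff_right: "cinner (x::'a::complex_inner) (y - z) = cinner x y - cinner x z"
  using cinner_add_right[of x y "-z"] by (simp add: cinner_minus_right)

lemma cinner_scaleR_left: "cinner (r *\<^sub>R x::'a::complex_inner) y = complex_of_real r * cinner x y"
  by (simp add: scaleR_scaleC cinner_scaleC_left)

lemma cinner_scaleR_right: "cinner (x::'a::complex_inner) (r *\<^sub>R y) = complex_of_real r * cinner x y"
  by (simp add: scaleR_scaleC cinner_scaleC_right)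

lemma norm_sq_cinner: "(norm (x::'a::complex_inner))^2 = Re (cinner x x)"
  using cinner_ge_zero[of x] by (simp add: norm_eq_sqrt_cinner)

lemma Re_cinner_commute: "Re (cinner (x::'a::complex_inner) y) = Re (cinner y x)"
  by (subst cinner_commute) simp

lemma c_subspace_convex: "c_subspace D \<Longrightarrow> convex D"
  unfolding c_subspace_def convex_def by (simp add: scaleR_scaleC)

lemma c_subspace_scaleR: "c_subspace D \<Longrightarrow> x \<in> D \<Longrightarrow> r *\<^sub>R x \<in> D"
  unfolding c_subspace_def by (simp add: scaleR_scaleC)

lemma c_adj_part:
  fixes D :: "'a::complex_inner set" and S :: "'a \<Rightarrow> 'b::complex_inner"
  assumes SD: "S ` D = UNIV" and TE: "T ` E = UNIV"
    and adj: "\<forall>x\<in>D. \<forall>y\<in>E. cinner (S x) y = cinner x (T y)"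
  shows "c_adjoint D S = op_graph E T"
proof
  show "op_graph E T \<subseteq> c_adjoint D S"
    using adj by (auto simp: op_graph_def c_adjoint_def)
next
  show "c_adjoint D S \<subseteq> op_graph E T"
  proof
    fix q assume "q \<in> c_adjoint D S"
    then obtain y z where q: "q = (y, z)" and h: "\<forall>x\<in>D. cinner (S x) y = cinner x z"
      by (auto simp: c_adjoint_def)
    obtain y' where y': "y' \<in> E" "z = T y'" using TE by (metis UNIV_I image_iff)
    obtain x where x: "x \<in> D" "S x = y - y'" using SD by (metis UNIV_I image_iff)
    have "cinner (S x) y = cinner x z" using h x(1) by blast
    also have "\<dots> = cinner (S x) y'" using adj x(1) y' by metis
    finally have "cinner (S x) y = cinner (S x) y'" .
    then have "cinner (y - y') (y - y') = 0" using x by (simp add: cinner_diff_right)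
    then have "y = y'" by (simp add: cinner_eq_zero_iff)
    then show "q \<in> op_graph E T" using q y' by (auto simp: op_graph_def)
  qed
qed

lemma c_dense_part:
  fixes D :: "'a::chilbert_space set" and S :: "'a \<Rightarrow> 'b::complex_inner"
  assumes lD: "c_lin_op D S" and lE: "c_lin_op E T" and SD: "S ` D = UNIV" and TE: "T ` E = UNIV"
    and adj: "\<forall>x\<in>D. \<forall>y\<in>E. cinner (S x) y = cinner x (T y)"
  shows "closure D = UNIV"
proof -
  have subD: "c_subspace D" using lD by (simp add: c_lin_op_def)
  have subE: "c_subspace E" using lE by (simp add: c_lin_op_def)
  have D0: "0 \<in> D" "0 \<in> E" using subD subE by (auto simp: c_subspace_def)
  have perp0: "v = 0" if v: "\<forall>x\<in>D. cinner x v = 0" for v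
  proof -
    obtain y where y: "y \<in> E" "v = T y" using TE by (metis UNIV_I image_iff)
    obtain x where x: "x \<in> D" "S x = y" using SD by (metis UNIV_I image_iff)
    have "cinner y y = cinner (S x) y" using x by simp
    also have "\<dots> = cinner x (T y)" using adj x(1) y(1) by blast
    also have "\<dots> = 0" using v x(1) y(2) by blast
    finally have "cinner y y = 0" .
    then have "y = 0" by (simp add: cinner_eq_zero_iff)
    have "T (scaleC 0 0) = scaleC 0 (T 0)" using lE D0 unfolding c_lin_op_def by blast
    then have "T 0 = 0" by simp
    then show "v = 0" using y \<open>y = 0\<close> by simp
  qed
  have par: "\<And>x y::'a. norm(x+y)^2 + norm(x-y)^2 = 2*norm x^2 + 2*norm y^2"
    by (simp add: norm_sq_cinner cinner_add_left cinner_add_right cinner_diff_left cinner_diff_right)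
  show ?thesis
  proof (rule set_eqI, rule iffI)
    fix w :: 'a
    have "\<exists>p\<in>closure D. \<forall>c\<in>closure D. dist w p \<le> dist w c"
      using subD D0 by (intro closest_point_exists_par par convex_closure c_subspace_convex) auto
    then obtain p where p: "p \<in> closure D" and pc: "\<And>c. c \<in> closure D \<Longrightarrow> dist w p \<le> dist w c"
      by blast
    define v where "v = w - p"
    have reorth: "Re (cinner m v) = 0" if m: "m \<in> D" for m
    proof -
      have "2*t*Re (cinner m v) \<le> t^2*Re (cinner m m)" for t
      proof -
        have "(+) (t *\<^sub>R m) ` D \<subseteq> D" using subD m c_subspace_scaleR[OF subD m, of t]
          by (auto simp: c_subspace_def)
        then have "closure ((+) (t *\<^sub>R m) ` D) \<subseteq> closure D" by (rule closure_mono)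
        then have "t *\<^sub>R m + p \<in> closure D" using p closure_translation[of "t *\<^sub>R m" D] by auto
        then have "dist w p \<le> dist w (t *\<^sub>R m + p)" by (rule pc)
        then have "norm v \<le> norm (v - t *\<^sub>R m)" by (simp add: dist_norm v_def algebra_simps)
        then have "(norm v)^2 \<le> (norm (v - t *\<^sub>R m))^2" by (simp add: power_mono)
        then have "Re (cinner v v) \<le> Re (cinner (v - t *\<^sub>R m) (v - t *\<^sub>R m))" by (simp only: norm_sq_cinner)
        then show ?thesis using Re_cinner_commute[of v m]
          by (simp add: cinner_diff_left cinner_diff_right cinner_scaleR_left cinner_scaleR_right
              power2_eq_square algebra_simps)
      qed
      then show "Re (cinner m v) = 0" using cinner_ge_zero[of m] by (intro quad_zero[of "Re (cinner m m)"]) auto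
    qed
    have orth: "cinner m v = 0" if m: "m \<in> D" for m
    proof -
      have "scaleC \<i> m \<in> D" using subD m by (simp add: c_subspace_def)
      then have "Re (cinner (scaleC \<i> m) v) = 0" by (rule reorth)
      then have "Im (cinner m v) = 0" by (simp add: cinner_scaleC_left)
      then show ?thesis using reorth[OF m] by (simp add: complex_eq_iff)
    qed
    then have "v = 0" using perp0 by blast
    then show "w \<in> closure D" using p by (simp add: v_def)
  qed simp
qed

lemma complex_part:
  fixes D :: "'a::chilbert_space set" and S :: "'a \<Rightarrow> 'b::chilbert_space"
  assumes "c_lin_op D S" and "c_lin_op E T" and "S ` D = UNIV" and "T ` E = UNIV"
    and adj: "\<forall>x\<in>D. \<forall>y\<in>E. cinner (S x) y = cinner x (T y)"
  shows "closure D = UNIV \<and> closure E = UNIV \<and> c_adjoint D S = op_graph E T \<and> c_adjoint E T = op_graph D S"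
proof -
  have adj': "\<forall>y\<in>E. \<forall>x\<in>D. cinner (T y) x = cinner y (S x)"
    using adj by (metis cinner_commute)
  show ?thesis using assms adj'
    by (simp add: c_dense_part[of D S E T] c_dense_part[of E T D S] c_adj_part[of S D T E] c_adj_part[of T E S D])
qed

end

theorem corollary3p5:
  shows "(\<forall>(D :: 'a::{real_inner, complete_space} set) (S :: 'a \<Rightarrow> 'b::{real_inner, complete_space})
            (E :: 'b set) (T :: 'b \<Rightarrow> 'a).
            r_lin_op D S \<and> r_lin_op E T \<and> S ` D = UNIV \<and> T ` E = UNIV \<and>
            (\<forall>x\<in>D. \<forall>y\<in>E. inner (S x) y = inner x (T y))
            \<longrightarrow> closure D = UNIV \<and> closure E = UNIV \<and>
                r_adjoint D S = op_graph E T \<and> r_adjoint E T = op_graph D S)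
       \<and> (\<forall>(D :: 'c::chilbert_space set) (S :: 'c \<Rightarrow> 'd::chilbert_space)
            (E :: 'd set) (T :: 'd \<Rightarrow> 'c).
            c_lin_op D S \<and> c_lin_op E T \<and> S ` D = UNIV \<and> T ` E = UNIV \<and>
            (\<forall>x\<in>D. \<forall>y\<in>E. cinner (S x) y = cinner x (T y))
            \<longrightarrow> closure D = UNIV \<and> closure E = UNIV \<and>
                c_adjoint D S = op_graph E T \<and> c_adjoint E T = op_graph D S)"
proof (rule conjI; intro allI impI)
  fix D :: "'a::{real_inner, complete_space} set" and S :: "'a \<Rightarrow> 'b::{real_inner, complete_space}"
    and E :: "'b set" and T :: "'b \<Rightarrow> 'a"
  assume "r_lin_op D S \<and> r_lin_op E T \<and> S ` D = UNIV \<and> T ` E = UNIV \<and>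
            (\<forall>x\<in>D. \<forall>y\<in>E. inner (S x) y = inner x (T y))"
  then show "closure D = UNIV \<and> closure E = UNIV \<and>
                r_adjoint D S = op_graph E T \<and> r_adjoint E T = op_graph D S"
    using real_part[of D S E T] by (elim conjE) simp
next
  fix D :: "'c::chilbert_space set" and S :: "'c \<Rightarrow> 'd::chilbert_space"
    and E :: "'d set" and T :: "'d \<Rightarrow> 'c"
  assume "c_lin_op D S \<and> c_lin_op E T \<and> S ` D = UNIV \<and> T ` E = UNIV \<and>
            (\<forall>x\<in>D. \<forall>y\<in>E. cinner (S x) y = cinner x (T y))"
  then show "closure D = UNIV \<and> closure E = UNIV \<and>
                c_adjoint D S = op_graph E T \<and> c_adjoint E T = op_graph D S"
    using complex_part[of D S E T] by (elim conjE) simp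
qed

end
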